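(* The mapping class group $\Gamma_2$ of the closed orientable genus 2 surface has the presentation $$\Gamma_2=\langle b_1,\dots,b_5 \mid b_ib_j=b_jb_i\ (|i-j|\geq 2),\ b_ib_{i+1}b_i=b_{i+1}b_ib_{i+1}\ (i\leq 4),\ (b_1b_2b_3b_4b_5)^6=1,\ [h_6,b_i]=1\ (1\le i\le 5),\ h_6^2=1\rangle,$$ where $h_6=b_5b_4b_3b_2b_1^2b_2b_3b_4b_5$.
   Context: Here $b_1,\dots,b_5$ correspond to the Dehn twists along a chain of simple closed curves $c_1,\dots,c_5$ on the genus 2 surface with $c_i,c_{i+1}$ meeting transversally in one point and $c_i,c_j$ disjoint for $|i-j|\ge 2$. It is known (Birman–Hilden) that $\Gamma_2=\langle b_1,\dots,b_5\mid \text{braid relations},\ (b_1b_2b_3)^4=b_5^2,\ [h_6,b_1]=1,\ h_6^2=1\rangle$, with $h_6$ the hyperelliptic involution. *)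

theory Defs
  imports "HOL-Algebra.Group"
begin

definition h6 :: "('a, 'm) monoid_scheme \<Rightarrow> (nat \<Rightarrow> 'a) \<Rightarrow> 'a" where
  "h6 G b = b 5 \<otimes>\<^bsub>G\<^esub> b 4 \<otimes>\<^bsub>G\<^esub> b 3 \<otimes>\<^bsub>G\<^esub> b 2 \<otimes>\<^bsub>G\<^esub> b 1 \<otimes>\<^bsub>G\<^esub> b 1
      \<otimes>\<^bsub>G\<^esub> b 2 \<otimes>\<^bsub>G\<^esub> b 3 \<otimes>\<^bsub>G\<^esub> b 4 \<otimes>\<^bsub>G\<^esub> b 5"

definition braid_rels :: "('a, 'm) monoid_scheme \<Rightarrow> (nat \<Rightarrow> 'a) \<Rightarrow> bool" where
  "braid_rels G b \<longleftrightarrow>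
     (\<forall>i\<in>{1..5}. \<forall>j\<in>{1..5}. (i + 2 \<le> j \<or> j + 2 \<le> i) \<longrightarrow>
         b i \<otimes>\<^bsub>G\<^esub> b j = b j \<otimes>\<^bsub>G\<^esub> b i)
   \<and> (\<forall>i\<in>{1..4}. b i \<otimes>\<^bsub>G\<^esub> b (i+1) \<otimes>\<^bsub>G\<^esub> b i
                  = b (i+1) \<otimes>\<^bsub>G\<^esub> b i \<otimes>\<^bsub>G\<^esub> b (i+1))"

(* Birman--Hilden relations (the known presentation of Gamma_2) *)
definition BH_rels :: "('a, 'm) monoid_scheme \<Rightarrow> (nat \<Rightarrow> 'a) \<Rightarrow> bool" where
  "BH_rels G b \<longleftrightarrow> braid_rels G b
   \<and> (b 1 \<otimes>\<^bsub>G\<^esub> b 2 \<otimes>\<^bsub>G\<^esub> b 3) [^]\<^bsub>G\<^esub> (4::nat) = b 5 [^]\<^bsub>G\<^esub> (2::nat)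
   \<and> h6 G b \<otimes>\<^bsub>G\<^esub> b 1 = b 1 \<otimes>\<^bsub>G\<^esub> h6 G b
   \<and> h6 G b [^]\<^bsub>G\<^esub> (2::nat) = \<one>\<^bsub>G\<^esub>"

definition new_rels :: "('a, 'm) monoid_scheme \<Rightarrow> (nat \<Rightarrow> 'a) \<Rightarrow> bool" where
  "new_rels G b \<longleftrightarrow> braid_rels G b
   \<and> (b 1 \<otimes>\<^bsub>G\<^esub> b 2 \<otimes>\<^bsub>G\<^esub> b 3 \<otimes>\<^bsub>G\<^esub> b 4 \<otimes>\<^bsub>G\<^esub> b 5) [^]\<^bsub>G\<^esub> (6::nat) = \<one>\<^bsub>G\<^esub>
   \<and> (\<forall>i\<in>{1..5}. h6 G b \<otimes>\<^bsub>G\<^esub> b i = b i \<otimes>\<^bsub>G\<^esub> h6 G b)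
   \<and> h6 G b [^]\<^bsub>G\<^esub> (2::nat) = \<one>\<^bsub>G\<^esub>"

end

theory Submission
  imports Defs
begin

fun front :: "nat \<Rightarrow> nat \<Rightarrow> nat list \<Rightarrow> nat list option" where
  "front 0 a w = None"
| "front (Suc f) a [] = None"
| "front (Suc f) a (c # u) =
     (if c = a then Some u
      else if c < 1 \<or> c > 5 \<or> a < 1 \<or> a > 5 then None
      else if a + 2 \<le> c \<or> c + 2 \<le> a then
        (case front f a u of None \<Rightarrow> None | Some u' \<Rightarrow> Some (c # u'))
      else (case front f a u of None \<Rightarrow> None
            | Some u' \<Rightarrow> (case front f c u' of None \<Rightarrow> None
                          | Some u'' \<Rightarrow> Some (c # a # u''))))"

fun eqv :: "nat list \<Rightarrow> nat list \<Rightarrow> bool" where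
  "eqv w1 [] = (w1 = [])"
| "eqv w1 (a # w2) = (case front 100 a w1 of None \<Rightarrow> False | Some w1' \<Rightarrow> eqv w1' w2)"

locale bw = group G for G :: "('a, 'm) monoid_scheme" (structure) +
  fixes b :: "nat \<Rightarrow> 'a"
  assumes car: "\<forall>i\<in>{1..5}. b i \<in> carrier G"
begin

definition B :: "nat \<Rightarrow> 'a" where "B i = (if i \<in> {1..5} then b i else \<one>)"

definition wd :: "nat list \<Rightarrow> 'a" where "wd w = foldr (\<lambda>i x. B i \<otimes> x) w \<one>"

lemma B_car[simp]: "B i \<in> carrier G"
  using car by (auto simp: B_def)

lemma wd_car[simp]: "wd w \<in> carrier G"
  by (induction w) (auto simp: wd_def)

lemma wd_Nil[simp]: "wd [] = \<one>" by (simp add: wd_def)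
lemma wd_Cons: "wd (i # w) = B i \<otimes> wd w" by (simp add: wd_def)

lemma wd_append: "wd (u @ v) = wd u \<otimes> wd v"
  by (induction u) (auto simp: wd_Cons m_assoc)

lemma wd_subst: "wd u = wd v \<Longrightarrow> wd (p @ u @ s) = wd (p @ v @ s)"
  by (simp add: wd_append)

lemma B_b: "i \<in> {1..5} \<Longrightarrow> B i = b i" by (simp add: B_def)

lemma front_sound:
  assumes br: "braid_rels G b"
  shows "front f a w = Some w' \<Longrightarrow> wd w = B a \<otimes> wd w'"
proof (induction f arbitrary: a w w')
  case 0 then show ?case by simp
next
  case (Suc f)
  show ?case
  proof (cases w)
    case Nil then show ?thesis using Suc.prems by simp
  next
    case (Cons c u)
    note w = Cons
    show ?thesis
    proof (cases "c = a")
      case True then show ?thesis using Suc.prems w by (simp add: wd_Cons)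
    next
      case ne: False
      show ?thesis
      proof (cases "c < 1 \<or> c > 5 \<or> a < 1 \<or> a > 5")
        case True then show ?thesis using Suc.prems w ne by simp
      next
        case rng: False
        show ?thesis
        proof (cases "a + 2 \<le> c \<or> c + 2 \<le> a")
          case far: True
          then obtain u' where u': "front f a u = Some u'" and w': "w' = c # u'"
            using Suc.prems w ne rng by (auto split: option.splits)
          have comm: "B c \<otimes> B a = B a \<otimes> B c"
            using br far rng unfolding braid_rels_def B_def by auto
          have "wd w = B c \<otimes> (B a \<otimes> wd u')" using Suc.IH[OF u'] w by (simp add: wd_Cons)
          also have "\<dots> = (B c \<otimes> B a) \<otimes> wd u'" by (simp add: m_assoc)
          also have "\<dots> = B a \<otimes> (B c \<otimes> wd u')" by (simp add: comm m_assoc)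
          finally show ?thesis using w' by (simp add: wd_Cons)
        next
          case adj: False
          then obtain u' u'' where u': "front f a u = Some u'" and u'': "front f c u' = Some u''"
              and w': "w' = c # a # u''"
            using Suc.prems w ne rng by (auto split: option.splits)
          have rel: "B c \<otimes> B a \<otimes> B c = B a \<otimes> B c \<otimes> B a"
          proof -
            have "a = c + 1 \<or> c = a + 1" using adj ne by auto
            then show ?thesis
            proof
              assume "a = c + 1"
              then show ?thesis using br rng unfolding braid_rels_def B_def by auto
            next
              assume "c = a + 1"
              then show ?thesis using br rng unfolding braid_rels_def B_def by auto
            qed
          qed
          have "wd w = B c \<otimes> (B a \<otimes> (B c \<otimes> wd u''))"
            using Suc.IH[OF u'] Suc.IH[OF u''] w by (simp add: wd_Cons)
          also have "\<dots> = (B c \<otimes> B a \<otimes> B c) \<otimes> wd u''" by (simp add: m_assoc)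
          also have "\<dots> = (B a \<otimes> B c \<otimes> B a) \<otimes> wd u''" by (simp add: rel)
          also have "\<dots> = B a \<otimes> (B c \<otimes> (B a \<otimes> wd u''))" by (simp add: m_assoc)
          finally show ?thesis using w' by (simp add: wd_Cons)
        qed
      qed
    qed
  qed
qed

lemma eqv_sound:
  assumes br: "braid_rels G b"
  shows "eqv w1 w2 \<Longrightarrow> wd w1 = wd w2"
proof (induction w2 arbitrary: w1)
  case Nil then show ?case by simp
next
  case (Cons a w2)
  then obtain w1' where f: "front 100 a w1 = Some w1'" and e: "eqv w1' w2"
    by (auto split: option.splits)
  show ?case using front_sound[OF br f] Cons.IH[OF e] by (simp add: wd_Cons)
qed

end


lemma (in bw) lcan: "x \<in> carrier G \<Longrightarrow> y \<in> carrier G \<Longrightarrow> z \<in> carrier G \<Longrightarrow> x \<otimes> y = x \<otimes> z \<Longrightarrow> y = z"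
  by (metis inv_closed l_inv l_one m_assoc)

lemma (in bw) wd_app2: "wd u \<otimes> wd v = wd (u @ v)" by (simp add: wd_append)

lemma (in bw) dirA:
  assumes br: "braid_rels G b"
    and R1: "wd [1,2,3,1,2,3,1,2,3,1,2,3] = wd [5,5]"
    and R3: "wd [5,4,3,2,1,1,2,3,4,5] \<otimes> wd [5,4,3,2,1,1,2,3,4,5] = \<one>"
  shows "wd [1,2,3,4,5,1,2,3,4,5,1,2,3,4,5,1,2,3,4,5,1,2,3,4,5,1,2,3,4,5] = \<one>" and "\<forall>i\<in>{1..5}. wd [5,4,3,2,1,1,2,3,4,5] \<otimes> wd [i] = wd [i] \<otimes> wd [5,4,3,2,1,1,2,3,4,5]"
proof -
  have e2: "wd [1,2,3,4,5,1,2,3,4,5,1,2,3,4,5,1,2,3,4,5,1,2,3,4,5,1,2,3,4,5] = wd [5,5,1,2,3,1,2,3,1,2,3,1,2,3,4,3,5,4,2,1,3,2,2,1,3,2,4,3,5,4]"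
    by (rule eqv_sound[OF br]) code_simp
  have a1: "wd [1,2,3,4,5,1,2,3,4,5,1,2,3,4,5,1,2,3,4,5,1,2,3,4,5,1,2,3,4,5] = wd [5,5,5,5,4,3,5,4,2,1,3,2,2,1,3,2,4,3,5,4]"
    using e2 wd_subst[OF R1, of "[5,5]" "[4,3,5,4,2,1,3,2,2,1,3,2,4,3,5,4]"] by simp
  have e3: "wd [1,1,5,5,4,3,5,4,2,1,3,2,2,1,3,2,4,3,5,4] = wd [4,3,5,4,1,2,3,1,2,3,1,2,3,1,2,3,4,3,5,4]"
    by (rule eqv_sound[OF br]) code_simp
  have e4: "wd [4,3,5,4,5,5,4,3,5,4] = wd [3,3,4,3,5,4,4,3,5,4]"
    by (rule eqv_sound[OF br]) code_simp
  have a3: "wd [1,1,5,5,4,3,5,4,2,1,3,2,2,1,3,2,4,3,5,4] = wd [3,3,4,3,5,4,4,3,5,4]"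
    using e3 e4 wd_subst[OF R1, of "[4,3,5,4]" "[4,3,5,4]"] by simp
  have e5: "wd [1,2,3,4,5,1,2,3,4,5,1,2,3,1,2,3,1,2,3,1,2,3] = wd [3,4,5,3,4,5,3,4,5,3,4,5,1,2,3,4,5,1,2,3,4,5]"
    by (rule eqv_sound[OF br]) code_simp
  have e6: "wd [1,2,3,4,5,1,2,3,4,5,5,5] = wd [1,1,1,2,3,4,5,1,2,3,4,5]"
    by (rule eqv_sound[OF br]) code_simp
  have "wd [3,4,5,3,4,5,3,4,5,3,4,5] \<otimes> wd [1,2,3,4,5,1,2,3,4,5] = wd [1,1] \<otimes> wd [1,2,3,4,5,1,2,3,4,5]"
  proof -
    have "wd [3,4,5,3,4,5,3,4,5,3,4,5] \<otimes> wd [1,2,3,4,5,1,2,3,4,5] = wd [1,2,3,4,5,1,2,3,4,5,1,2,3,1,2,3,1,2,3,1,2,3]" using e5 by (simp add: wd_app2)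
    also have "\<dots> = wd [1,2,3,4,5,1,2,3,4,5,5,5]" using wd_subst[OF R1, of "[1,2,3,4,5,1,2,3,4,5]" "[]"] by simp
    also have "\<dots> = wd [1,1] \<otimes> wd [1,2,3,4,5,1,2,3,4,5]" using e6 by (simp add: wd_app2)
    finally show ?thesis .
  qed
  then have a4: "wd [3,4,5,3,4,5,3,4,5,3,4,5] = wd [1,1]" by simp
  have e7: "wd [3,4,5,3,4,5,3,4,5,3,4,5] = wd [5,5,3,3,4,3,5,4,4,3,5,4]"
    by (rule eqv_sound[OF br]) code_simp
  have e8: "wd [1,1,5,5,5,5,5,5,4,3,5,4,2,1,3,2,2,1,3,2,4,3,5,4] = wd [5,5,5,5,1,1,5,5,4,3,5,4,2,1,3,2,2,1,3,2,4,3,5,4]"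
    by (rule eqv_sound[OF br]) code_simp
  have e9: "wd [5,5,1,1] = wd [1,1,5,5]"
    by (rule eqv_sound[OF br]) code_simp
  have "wd [1,1,5,5] \<otimes> wd [1,2,3,4,5,1,2,3,4,5,1,2,3,4,5,1,2,3,4,5,1,2,3,4,5,1,2,3,4,5] = wd [1,1,5,5] \<otimes> \<one>"
  proof -
    have "wd [1,1,5,5] \<otimes> wd [1,2,3,4,5,1,2,3,4,5,1,2,3,4,5,1,2,3,4,5,1,2,3,4,5,1,2,3,4,5] = wd [1,1,5,5,5,5,5,5,4,3,5,4,2,1,3,2,2,1,3,2,4,3,5,4]" using a1 by (simp add: wd_app2)
    also have "\<dots> = wd [5,5,5,5,1,1,5,5,4,3,5,4,2,1,3,2,2,1,3,2,4,3,5,4]" using e8 .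
    also have "\<dots> = wd [5,5,5,5] \<otimes> wd [1,1,5,5,4,3,5,4,2,1,3,2,2,1,3,2,4,3,5,4]" by (simp add: wd_app2)
    also have "\<dots> = wd [5,5] \<otimes> wd [5,5,3,3,4,3,5,4,4,3,5,4]" using a3 by (simp add: wd_app2)
    also have "\<dots> = wd [5,5,1,1]" using a4 e7 by (simp add: wd_app2)
    also have "\<dots> = wd [1,1,5,5] \<otimes> \<one>" using e9 by simp
    finally show ?thesis .
  qed
  then show D6: "wd [1,2,3,4,5,1,2,3,4,5,1,2,3,4,5,1,2,3,4,5,1,2,3,4,5,1,2,3,4,5] = \<one>" by (rule lcan[rotated 3]) auto
  have e10: "wd [1,2,3,4,5,1,2,3,4,5,1,2,3,4,5,1,2,3,4,5,1,2,3,4,5,1,2,3,4,5] = wd [1,2,3,4,1,2,3,4,1,2,3,4,1,2,3,4,1,2,3,4,5,4,3,2,1,1,2,3,4,5]"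
    by (rule eqv_sound[OF br]) code_simp
  have e11: "wd [1,2,3,4,1,2,3,4,1,2,3,4,1,2,3,4,1,2,3,4] = wd [1,2,3,1,2,3,1,2,3,1,2,3,4,3,2,1,1,2,3,4]"
    by (rule eqv_sound[OF br]) code_simp
  have c1: "wd [1,2,3,4,1,2,3,4,1,2,3,4,1,2,3,4,1,2,3,4,1] = wd [1,1,2,3,4,1,2,3,4,1,2,3,4,1,2,3,4,1,2,3,4]"
    by (rule eqv_sound[OF br]) code_simp
  have c2: "wd [1,2,3,4,1,2,3,4,1,2,3,4,1,2,3,4,1,2,3,4,2] = wd [2,1,2,3,4,1,2,3,4,1,2,3,4,1,2,3,4,1,2,3,4]"
    by (rule eqv_sound[OF br]) code_simp
  have c3: "wd [1,2,3,4,1,2,3,4,1,2,3,4,1,2,3,4,1,2,3,4,3] = wd [3,1,2,3,4,1,2,3,4,1,2,3,4,1,2,3,4,1,2,3,4]"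
    by (rule eqv_sound[OF br]) code_simp
  have c4: "wd [1,2,3,4,1,2,3,4,1,2,3,4,1,2,3,4,1,2,3,4,4] = wd [4,1,2,3,4,1,2,3,4,1,2,3,4,1,2,3,4,1,2,3,4]"
    by (rule eqv_sound[OF br]) code_simp
  have x1: "wd [1,2,3,4,1,2,3,4,1,2,3,4,1,2,3,4,1,2,3,4] \<otimes> wd [5,4,3,2,1,1,2,3,4,5] = \<one>" using D6 e10 by (simp add: wd_app2)
  have DH: "wd [1,2,3,4,1,2,3,4,1,2,3,4,1,2,3,4,1,2,3,4] = wd [5,4,3,2,1,1,2,3,4,5]"
  proof -
    have "wd [1,2,3,4,1,2,3,4,1,2,3,4,1,2,3,4,1,2,3,4] = wd [1,2,3,4,1,2,3,4,1,2,3,4,1,2,3,4,1,2,3,4] \<otimes> (wd [5,4,3,2,1,1,2,3,4,5] \<otimes> wd [5,4,3,2,1,1,2,3,4,5])" using R3 by simp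
    also have "\<dots> = (wd [1,2,3,4,1,2,3,4,1,2,3,4,1,2,3,4,1,2,3,4] \<otimes> wd [5,4,3,2,1,1,2,3,4,5]) \<otimes> wd [5,4,3,2,1,1,2,3,4,5]" by (simp add: m_assoc)
    also have "\<dots> = wd [5,4,3,2,1,1,2,3,4,5]" using x1 by simp
    finally show ?thesis .
  qed
  have c5: "wd [1,2,3,4,1,2,3,4,1,2,3,4,1,2,3,4,1,2,3,4,5] = wd [5,1,2,3,4,1,2,3,4,1,2,3,4,1,2,3,4,1,2,3,4]"
  proof -
    have "wd [1,2,3,4,1,2,3,4,1,2,3,4,1,2,3,4,1,2,3,4,5] = wd [1,2,3,1,2,3,1,2,3,1,2,3,4,3,2,1,1,2,3,4,5]" using wd_subst[OF e11, of "[]" "[5]"] by simp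
    also have "\<dots> = wd [5,5,4,3,2,1,1,2,3,4,5]" using wd_subst[OF R1, of "[]" "[4,3,2,1,1,2,3,4,5]"] by simp
    also have "\<dots> = wd [5] \<otimes> wd [5,4,3,2,1,1,2,3,4,5]" by (simp add: wd_app2)
    also have "\<dots> = wd [5] \<otimes> wd [1,2,3,4,1,2,3,4,1,2,3,4,1,2,3,4,1,2,3,4]" using DH by simp
    also have "\<dots> = wd [5,1,2,3,4,1,2,3,4,1,2,3,4,1,2,3,4,1,2,3,4]" by (simp add: wd_app2)
    finally show ?thesis .
  qed
  show "\<forall>i\<in>{1..5}. wd [5,4,3,2,1,1,2,3,4,5] \<otimes> wd [i] = wd [i] \<otimes> wd [5,4,3,2,1,1,2,3,4,5]"
  proof
    fix i :: nat assume "i \<in> {1..5}"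
    then have "i = 1 \<or> i = 2 \<or> i = 3 \<or> i = 4 \<or> i = 5" by auto
    then show "wd [5,4,3,2,1,1,2,3,4,5] \<otimes> wd [i] = wd [i] \<otimes> wd [5,4,3,2,1,1,2,3,4,5]"
      using c1 c2 c3 c4 c5 unfolding DH[symmetric] by (auto simp: wd_app2)
  qed
qed

lemma (in bw) dirB:
  assumes br: "braid_rels G b"
    and N1: "wd [1,2,3,4,5,1,2,3,4,5,1,2,3,4,5,1,2,3,4,5,1,2,3,4,5,1,2,3,4,5] = \<one>"
    and N2: "wd [5,4,3,2,1,1,2,3,4,5] \<otimes> wd [5] = wd [5] \<otimes> wd [5,4,3,2,1,1,2,3,4,5]"
    and R3: "wd [5,4,3,2,1,1,2,3,4,5] \<otimes> wd [5,4,3,2,1,1,2,3,4,5] = \<one>"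
  shows "wd [1,2,3,1,2,3,1,2,3,1,2,3] = wd [5,5]"
proof -
  have e10: "wd [1,2,3,4,5,1,2,3,4,5,1,2,3,4,5,1,2,3,4,5,1,2,3,4,5,1,2,3,4,5] = wd [1,2,3,4,1,2,3,4,1,2,3,4,1,2,3,4,1,2,3,4,5,4,3,2,1,1,2,3,4,5]"
    by (rule eqv_sound[OF br]) code_simp
  have e11: "wd [1,2,3,4,1,2,3,4,1,2,3,4,1,2,3,4,1,2,3,4] = wd [1,2,3,1,2,3,1,2,3,1,2,3,4,3,2,1,1,2,3,4]"
    by (rule eqv_sound[OF br]) code_simp
  have x1: "wd [1,2,3,4,1,2,3,4,1,2,3,4,1,2,3,4,1,2,3,4] \<otimes> wd [5,4,3,2,1,1,2,3,4,5] = \<one>" using N1 e10 by (simp add: wd_app2)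
  have DH: "wd [1,2,3,4,1,2,3,4,1,2,3,4,1,2,3,4,1,2,3,4] = wd [5,4,3,2,1,1,2,3,4,5]"
  proof -
    have "wd [1,2,3,4,1,2,3,4,1,2,3,4,1,2,3,4,1,2,3,4] = wd [1,2,3,4,1,2,3,4,1,2,3,4,1,2,3,4,1,2,3,4] \<otimes> (wd [5,4,3,2,1,1,2,3,4,5] \<otimes> wd [5,4,3,2,1,1,2,3,4,5])" using R3 by simp
    also have "\<dots> = (wd [1,2,3,4,1,2,3,4,1,2,3,4,1,2,3,4,1,2,3,4] \<otimes> wd [5,4,3,2,1,1,2,3,4,5]) \<otimes> wd [5,4,3,2,1,1,2,3,4,5]" by (simp add: m_assoc)
    also have "\<dots> = wd [5,4,3,2,1,1,2,3,4,5]" using x1 by simp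
    finally show ?thesis .
  qed
  have "wd [5,5] \<otimes> wd [4,3,2,1,1,2,3,4,5] = wd [1,2,3,1,2,3,1,2,3,1,2,3] \<otimes> wd [4,3,2,1,1,2,3,4,5]"
  proof -
    have "wd [5,5] \<otimes> wd [4,3,2,1,1,2,3,4,5] = wd [5] \<otimes> wd [5,4,3,2,1,1,2,3,4,5]" by (simp add: wd_app2)
    also have "\<dots> = wd [5,4,3,2,1,1,2,3,4,5] \<otimes> wd [5]" using N2 by simp
    also have "\<dots> = wd [1,2,3,4,1,2,3,4,1,2,3,4,1,2,3,4,1,2,3,4] \<otimes> wd [5]" using DH by simp
    also have "\<dots> = wd [1,2,3,4,1,2,3,4,1,2,3,4,1,2,3,4,1,2,3,4,5]" by (simp add: wd_app2)
    also have "\<dots> = wd [1,2,3,1,2,3,1,2,3,1,2,3,4,3,2,1,1,2,3,4,5]" using wd_subst[OF e11, of "[]" "[5]"] by simp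
    also have "\<dots> = wd [1,2,3,1,2,3,1,2,3,1,2,3] \<otimes> wd [4,3,2,1,1,2,3,4,5]" by (simp add: wd_app2)
    finally show ?thesis .
  qed
  then show ?thesis by simp
qed


lemma (in bw) wd_pow: "wd u [^] (n::nat) = wd (concat (replicate n u))"
proof (induction n)
  case 0 then show ?case by simp
next
  case (Suc n)
  have "wd u [^] Suc n = wd u \<otimes> wd u [^] n" by (rule nat_pow_Suc2) simp
  then show ?case using Suc.IH by (simp add: wd_append)
qed

theorem lemma2p14:
  fixes G :: "('a, 'm) monoid_scheme" and b :: "nat \<Rightarrow> 'a"
  assumes "group G"
    and "\<forall>i\<in>{1..5}. b i \<in> carrier G"
  shows "BH_rels G b \<longleftrightarrow> new_rels G b"
proof -
  interpret bw G b using assms by (simp add: bw_def bw_axioms_def)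
  have bi: "b i = wd [i]" if "i \<in> {1..5}" for i
    using that car by (simp add: wd_Cons B_b)
  have b1: "b 1 = wd [1]" and b2: "b 2 = wd [2]" and b3: "b 3 = wd [3]"
    and b4: "b 4 = wd [4]" and b5: "b 5 = wd [5]" by (simp_all add: bi)
  note bs = b1 b2 b3 b4 b5
  have Hc: "h6 G b = wd [5,4,3,2,1,1,2,3,4,5]"
    unfolding h6_def by (simp only: bs) (simp add: wd_app2)
  have D4c: "(b 1 \<otimes>\<^bsub>G\<^esub> b 2 \<otimes>\<^bsub>G\<^esub> b 3) [^]\<^bsub>G\<^esub> (4::nat) = wd [1,2,3,1,2,3,1,2,3,1,2,3]"
    by (simp only: bs) (simp add: wd_app2 wd_pow numeral_eq_Suc)
  have B5c: "b 5 [^]\<^bsub>G\<^esub> (2::nat) = wd [5,5]"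
    by (simp only: bs) (simp add: wd_app2 wd_pow numeral_eq_Suc)
  have D6c: "(b 1 \<otimes>\<^bsub>G\<^esub> b 2 \<otimes>\<^bsub>G\<^esub> b 3 \<otimes>\<^bsub>G\<^esub> b 4 \<otimes>\<^bsub>G\<^esub> b 5) [^]\<^bsub>G\<^esub> (6::nat) = wd [1,2,3,4,5,1,2,3,4,5,1,2,3,4,5,1,2,3,4,5,1,2,3,4,5,1,2,3,4,5]"
    by (simp only: bs) (simp add: wd_app2 wd_pow numeral_eq_Suc)
  have H2c: "h6 G b [^]\<^bsub>G\<^esub> (2::nat) = wd [5,4,3,2,1,1,2,3,4,5] \<otimes>\<^bsub>G\<^esub> wd [5,4,3,2,1,1,2,3,4,5]"
    by (simp only: Hc) (simp add: wd_app2 wd_pow numeral_eq_Suc)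
  have comm: "(\<forall>i\<in>{1..5}. h6 G b \<otimes>\<^bsub>G\<^esub> b i = b i \<otimes>\<^bsub>G\<^esub> h6 G b) \<longleftrightarrow>
     (\<forall>i\<in>{1..5}. wd [5,4,3,2,1,1,2,3,4,5] \<otimes>\<^bsub>G\<^esub> wd [i] = wd [i] \<otimes>\<^bsub>G\<^esub> wd [5,4,3,2,1,1,2,3,4,5])"
    using bi Hc by auto
  show ?thesis
  proof
    assume "BH_rels G b"
    then have br: "braid_rels G b" and R1: "wd [1,2,3,1,2,3,1,2,3,1,2,3] = wd [5,5]"
      and R3: "wd [5,4,3,2,1,1,2,3,4,5] \<otimes>\<^bsub>G\<^esub> wd [5,4,3,2,1,1,2,3,4,5] = \<one>\<^bsub>G\<^esub>"
      unfolding BH_rels_def using D4c B5c H2c by auto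
    show "new_rels G b"
      unfolding new_rels_def using br dirA[OF br R1 R3] D6c comm H2c R3 by simp
  next
    assume "new_rels G b"
    then have br: "braid_rels G b" and N1: "wd [1,2,3,4,5,1,2,3,4,5,1,2,3,4,5,1,2,3,4,5,1,2,3,4,5,1,2,3,4,5] = \<one>\<^bsub>G\<^esub>"
      and Nc: "\<forall>i\<in>{1..5}. wd [5,4,3,2,1,1,2,3,4,5] \<otimes>\<^bsub>G\<^esub> wd [i] = wd [i] \<otimes>\<^bsub>G\<^esub> wd [5,4,3,2,1,1,2,3,4,5]"
      and R3: "wd [5,4,3,2,1,1,2,3,4,5] \<otimes>\<^bsub>G\<^esub> wd [5,4,3,2,1,1,2,3,4,5] = \<one>\<^bsub>G\<^esub>"
      unfolding new_rels_def using D6c comm H2c by auto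
    have N2: "wd [5,4,3,2,1,1,2,3,4,5] \<otimes>\<^bsub>G\<^esub> wd [5] = wd [5] \<otimes>\<^bsub>G\<^esub> wd [5,4,3,2,1,1,2,3,4,5]" using Nc by auto
    have N3: "h6 G b \<otimes>\<^bsub>G\<^esub> b 1 = b 1 \<otimes>\<^bsub>G\<^esub> h6 G b" using Nc comm by auto
    show "BH_rels G b"
      unfolding BH_rels_def using br dirB[OF br N1 N2 R3] D4c B5c N3 H2c R3 by simp
  qed
qed

end
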